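(* Let $v\in\{\mathrm{RR},\mathrm{VV},\mathrm{VN},\mathrm{AZ}\}$ and let $\mathbf X_1=(X_{11},\ldots,X_{1d})^\top$ be a $d$-dimensional random vector with mean $\boldsymbol\mu$ and covariance $\boldsymbol\Sigma$ satisfying Assumption 1 for the variant $v$ and Assumption 2. Then $\sigma^2_{C^v}>0$ and hence $\sigma^2_{B^v}>0$.
   Context: MCVs: $C^{\mathrm{RR}}=\sqrt{(\det\boldsymbol\Sigma)^{1/d}/(\boldsymbol\mu^\top\boldsymbol\mu)}$, $C^{\mathrm{VV}}=\sqrt{\mathrm{tr}\boldsymbol\Sigma/(\boldsymbol\mu^\top\boldsymbol\mu)}$, $C^{\mathrm{VN}}=\sqrt{1/(\boldsymbol\mu^\top\boldsymbol\Sigma^{-1}\boldsymbol\mu)}$, $C^{\mathrm{AZ}}=\sqrt{\boldsymbol\mu^\top\boldsymbol\Sigma\boldsymbol\mu/(\boldsymbol\mu^\top\boldsymbol\mu)^2}$. Assumption 1 (for variant $v$): $\boldsymbol\mu\neq\mathbf 0$ and all coordinates have finite fourth moments; moreover for $v\in\{\mathrm{RR},\mathrm{VN}\}$, $\boldsymbol\Sigma$ is regular; for $v=\mathrm{VV}$, $\boldsymbol\Sigma\neq\mathbf 0_{d\times d}$; for $v=\mathrm{AZ}$, $\boldsymbol\mu^\top\boldsymbol\Sigma\boldsymbol\mu>0$. Assumption 2: no coordinate of $\mathbf X_1$ is conditionally two-point distributed, where the $r$-th coordinate $Y_r$ of a random vector $\mathbf Y\in\mathbb R^d$ is called conditionally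 two-point distributed if, given the remaining components $(Y_s)_{s\neq r}$, it is (conditionally) degenerate or takes (conditionally) only two different values with positive probability. $\boldsymbol\Psi_3,\boldsymbol\Psi_4$: $[\boldsymbol\Psi_3]_{(a-1)d+r,s}=E(X_{1a}X_{1r}X_{1s})-E(X_{1a}X_{1r})E(X_{1s})$, $[\boldsymbol\Psi_4]_{(a-1)d+r,(b-1)d+s}=E(X_{1a}X_{1r}X_{1b}X_{1s})-E(X_{1a}X_{1r})E(X_{1b}X_{1s})$. For $\mathbf x\in\mathbb R^d$, $[\widetilde{\mathbf D}(\mathbf x)]_{(a-1)d+r,s}=-x_r\mathbf 1\{s=a\neq r\}-2x_s\mathbf 1\{s=r=a\}-x_a\mathbf 1\{r=s\neq a\}$. $\mathrm{vec}$ stacks columns, $\otimes$ is the Kronecker product. Row vectors: $\mathbf A_{\mathrm{RR}}=\Big(-2d\det(\boldsymbol\Sigma)\frac{\boldsymbol\mu^\top}{(\boldsymbol\mu^\top\boldsymbol\mu)^{d+1}}+\frac{\det(\boldsymbol\Sigma)(\mathrm{vec}(\boldsymbol\Sigma^{-1}))^\top}{(\boldsymbol\mu^\top\boldsymbol\mu)^d}\widetilde{\mathbf D}(\boldsymbol\mu),\ \frac{\det(\boldsymbol\Sigma)(\mathrm{vec}(\boldsymbol\Sigma^{-1}))^\top}{(\boldsymbol\mu^\top\boldsymbol\mu)^d}\Big)$, $\mathbf A_{\mathrm{VV}}=\Big(-2\,\mathrm{tr}(\boldsymbol\Sigma)\frac{\boldsymbol\mu^\top}{(\boldsymbol\mu^\top\boldsymbol\mu)^2}+\frac{(\mathrm{vec}(\mathbf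 I_d))^\top\widetilde{\mathbf D}(\boldsymbol\mu)}{\boldsymbol\mu^\top\boldsymbol\mu},\ \frac{(\mathrm{vec}(\mathbf I_d))^\top}{\boldsymbol\mu^\top\boldsymbol\mu}\Big)$, $\mathbf A_{\mathrm{VN}}=\Big(2\boldsymbol\mu^\top\boldsymbol\Sigma^{-1}-[(\boldsymbol\mu^\top\boldsymbol\Sigma^{-1})\otimes(\boldsymbol\mu^\top\boldsymbol\Sigma^{-1})]\widetilde{\mathbf D}(\boldsymbol\mu),\ -(\boldsymbol\mu^\top\boldsymbol\Sigma^{-1})\otimes(\boldsymbol\mu^\top\boldsymbol\Sigma^{-1})\Big)$, $\mathbf A_{\mathrm{AZ}}=\Big(-4\boldsymbol\mu^\top\boldsymbol\Sigma\boldsymbol\mu\frac{\boldsymbol\mu^\top}{(\boldsymbol\mu^\top\boldsymbol\mu)^3}+2\frac{\boldsymbol\mu^\top\boldsymbol\Sigma}{(\boldsymbol\mu^\top\boldsymbol\mu)^2}+\frac{(\boldsymbol\mu^\top\otimes\boldsymbol\mu^\top)\widetilde{\mathbf D}(\boldsymbol\mu)}{(\boldsymbol\mu^\top\boldsymbol\mu)^2},\ \frac{\boldsymbol\mu^\top\otimes\boldsymbol\mu^\top}{(\boldsymbol\mu^\top\boldsymbol\mu)^2}\Big)$. $S_{\mathrm{RR}}=d^{-2}(C^{\mathrm{RR}})^{2-4d}$, $S_{\mathrm{VV}}=(C^{\mathrm{VV}})^{-2}$, $S_{\mathrm{VN}}=(C^{\mathrm{VN}})^{6}$, $S_{\mathrm{AZ}}=(C^{\mathrm{AZ}})^{-2}$;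 $\sigma^2_{C^v}=\frac{S_v}{4}\mathbf A_v(\boldsymbol\mu,\boldsymbol\Sigma)\begin{pmatrix}\boldsymbol\Sigma&\boldsymbol\Psi_3^\top\\\boldsymbol\Psi_3&\boldsymbol\Psi_4\end{pmatrix}\mathbf A_v(\boldsymbol\mu,\boldsymbol\Sigma)^\top$ and $\sigma^2_{B^v}=(C^v)^{-4}\sigma^2_{C^v}$. *)

theory Defs
  imports "HOL-Probability.Probability"
begin

text \<open>A random vector X :: 'a => real^'d on a probability space M. The dimension is d = CARD('d).
  Indices (a-1)d+r of vectors of length d^2 are represented by pairs (a,r) :: 'd * 'd.\<close>

datatype mcv_variant = RR | VV | VN | AZ

definition E :: "'a measure \<Rightarrow> ('a \<Rightarrow> real) \<Rightarrow> real" where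
  "E M f = integral\<^sup>L M f"

definition mu :: "'a measure \<Rightarrow> ('a \<Rightarrow> real^'d) \<Rightarrow> real^'d" where
  "mu M X = (\<chi> i. E M (\<lambda>w. X w $ i))"

definition Sig :: "'a measure \<Rightarrow> ('a \<Rightarrow> real^'d) \<Rightarrow> real^'d^'d" where
  "Sig M X = (\<chi> r s. E M (\<lambda>w. X w $ r * X w $ s) - mu M X $ r * mu M X $ s)"

definition Psi3 :: "'a measure \<Rightarrow> ('a \<Rightarrow> real^'d) \<Rightarrow> 'd \<times> 'd \<Rightarrow> 'd \<Rightarrow> real" where
  "Psi3 M X p s = (case p of (a, r) \<Rightarrow>
     E M (\<lambda>w. X w $ a * X w $ r * X w $ s) - E M (\<lambda>w. X w $ a * X w $ r) * E M (\<lambda>w. X w $ s))"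

definition Psi4 :: "'a measure \<Rightarrow> ('a \<Rightarrow> real^'d) \<Rightarrow> 'd \<times> 'd \<Rightarrow> 'd \<times> 'd \<Rightarrow> real" where
  "Psi4 M X p q = (case p of (a, r) \<Rightarrow> case q of (b, s) \<Rightarrow>
     E M (\<lambda>w. X w $ a * X w $ r * X w $ b * X w $ s)
     - E M (\<lambda>w. X w $ a * X w $ r) * E M (\<lambda>w. X w $ b * X w $ s))"

definition Dt :: "real^'d \<Rightarrow> 'd \<times> 'd \<Rightarrow> 'd \<Rightarrow> real" where
  "Dt x p s = (case p of (a, r) \<Rightarrow>
     - x $ r * (if s = a \<and> a \<noteq> r then 1 else 0)
     - 2 * x $ s * (if s = r \<and> r = a then 1 else 0)
     - x $ a * (if r = s \<and> s \<noteq> a then 1 else 0))"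

definition rowD :: "('d \<times> 'd \<Rightarrow> real) \<Rightarrow> real^'d \<Rightarrow> 'd \<Rightarrow> real" where
  "rowD u x s = (\<Sum>p\<in>UNIV. u p * Dt x p s)"

definition trace_m :: "real^'d^'d \<Rightarrow> real" where
  "trace_m S = (\<Sum>i\<in>UNIV. S $ i $ i)"

text \<open>First block (length d) and second block (length d^2, index (a-1)d+r ~ (a,r)) of A_v(mu,Sigma).
  vec stacks columns: vec(B) at index (a-1)d+r is B_{r,a}; (u^T (x) w^T) at (a-1)d+r is u_a w_r.\<close>
definition A2 :: "mcv_variant \<Rightarrow> real^'d \<Rightarrow> real^'d^'d \<Rightarrow> 'd \<times> 'd \<Rightarrow> real" where
  "A2 v m S p = (case p of (a, r) \<Rightarrow> (case v of
     RR \<Rightarrow> det S * matrix_inv S $ r $ a / (m \<bullet> m) ^ CARD('d)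
   | VV \<Rightarrow> (if r = a then 1 else 0) / (m \<bullet> m)
   | VN \<Rightarrow> - ((m v* matrix_inv S) $ a * (m v* matrix_inv S) $ r)
   | AZ \<Rightarrow> m $ a * m $ r / (m \<bullet> m) ^ 2))"

definition A1 :: "mcv_variant \<Rightarrow> real^'d \<Rightarrow> real^'d^'d \<Rightarrow> 'd \<Rightarrow> real" where
  "A1 v m S s = (case v of
     RR \<Rightarrow> - 2 * real CARD('d) * det S * m $ s / (m \<bullet> m) ^ (CARD('d) + 1)
           + rowD (A2 RR m S) m s
   | VV \<Rightarrow> - 2 * trace_m S * m $ s / (m \<bullet> m) ^ 2
           + rowD (\<lambda>(a, r). if r = a then 1 else 0) m s / (m \<bullet> m)
   | VN \<Rightarrow> 2 * (m v* matrix_inv S) $ s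
           - rowD (\<lambda>(a, r). (m v* matrix_inv S) $ a * (m v* matrix_inv S) $ r) m s
   | AZ \<Rightarrow> - 4 * (m \<bullet> (S *v m)) * m $ s / (m \<bullet> m) ^ 3
           + 2 * (m v* S) $ s / (m \<bullet> m) ^ 2
           + rowD (\<lambda>(a, r). m $ a * m $ r) m s / (m \<bullet> m) ^ 2)"

definition MCV :: "mcv_variant \<Rightarrow> real^'d \<Rightarrow> real^'d^'d \<Rightarrow> real" where
  "MCV v m S = (case v of
     RR \<Rightarrow> sqrt (det S powr (1 / real CARD('d)) / (m \<bullet> m))
   | VV \<Rightarrow> sqrt (trace_m S / (m \<bullet> m))
   | VN \<Rightarrow> sqrt (1 / (m \<bullet> (matrix_inv S *v m)))
   | AZ \<Rightarrow> sqrt ((m \<bullet> (S *v m)) / (m \<bullet> m) ^ 2))"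

definition Sfac :: "mcv_variant \<Rightarrow> real^'d \<Rightarrow> real^'d^'d \<Rightarrow> real" where
  "Sfac v m S = (case v of
     RR \<Rightarrow> (1 / real CARD('d) ^ 2) * MCV RR m S powr (2 - 4 * real CARD('d))
   | VV \<Rightarrow> MCV VV m S powr (-2)
   | VN \<Rightarrow> MCV VN m S ^ 6
   | AZ \<Rightarrow> MCV AZ m S powr (-2))"

text \<open>A_v Gamma A_v^T with Gamma = [[Sigma, Psi3^T],[Psi3, Psi4]].\<close>
definition sigma2_C :: "mcv_variant \<Rightarrow> 'a measure \<Rightarrow> ('a \<Rightarrow> real^'d) \<Rightarrow> real" where
  "sigma2_C v M X = (let m = mu M X; S = Sig M X; a1 = A1 v m S; a2 = A2 v m S in
     Sfac v m S / 4 *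
      ((\<Sum>r\<in>UNIV. \<Sum>s\<in>UNIV. a1 r * S $ r $ s * a1 s)
     + (\<Sum>r\<in>UNIV. \<Sum>p\<in>UNIV. a1 r * Psi3 M X p r * a2 p)
     + (\<Sum>p\<in>UNIV. \<Sum>s\<in>UNIV. a2 p * Psi3 M X p s * a1 s)
     + (\<Sum>p\<in>UNIV. \<Sum>q\<in>UNIV. a2 p * Psi4 M X p q * a2 q)))"

definition sigma2_B :: "mcv_variant \<Rightarrow> 'a measure \<Rightarrow> ('a \<Rightarrow> real^'d) \<Rightarrow> real" where
  "sigma2_B v M X = MCV v (mu M X) (Sig M X) powr (-4) * sigma2_C v M X"

definition assumption1 :: "mcv_variant \<Rightarrow> 'a measure \<Rightarrow> ('a \<Rightarrow> real^'d) \<Rightarrow> bool" where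
  "assumption1 v M X \<longleftrightarrow>
     mu M X \<noteq> 0 \<and> (\<forall>i. integrable M (\<lambda>w. (X w $ i) ^ 4)) \<and>
     (case v of
        RR \<Rightarrow> invertible (Sig M X)
      | VN \<Rightarrow> invertible (Sig M X)
      | VV \<Rightarrow> Sig M X \<noteq> 0
      | AZ \<Rightarrow> mu M X \<bullet> (Sig M X *v mu M X) > 0)"

text \<open>The remaining components (Y_s)_{s~=r}, encoded as Y with the r-th coordinate set to 0.\<close>
definition others :: "'d \<Rightarrow> real^'d \<Rightarrow> real^'d" where
  "others r y = (\<chi> s. if s = r then 0 else y $ s)"

definition cond_two_point :: "'a measure \<Rightarrow> ('a \<Rightarrow> real^'d) \<Rightarrow> 'd \<Rightarrow> bool" where
  "cond_two_point M Y r \<longleftrightarrow>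
     (\<exists>g h :: real^'d \<Rightarrow> real. g \<in> borel_measurable borel \<and> h \<in> borel_measurable borel \<and>
        (AE w in M. Y w $ r = g (others r (Y w)) \<or> Y w $ r = h (others r (Y w))))"

definition assumption2 :: "'a measure \<Rightarrow> ('a \<Rightarrow> real^'d) \<Rightarrow> bool" where
  "assumption2 M X \<longleftrightarrow> (\<forall>r. \<not> cond_two_point M X r)"

end

theory Submission
  imports Defs "HOL-Library.Quadratic_Discriminant"
begin

lemma minv: assumes "invertible (A::real^'n^'n)"
  shows "A ** matrix_inv A = mat 1" "matrix_inv A ** A = mat 1"
proof -
  have "A ** matrix_inv A = mat 1 \<and> matrix_inv A ** A = mat 1"
    unfolding matrix_inv_def using assms unfolding invertible_def by (rule someI_ex)
  then show "A ** matrix_inv A = mat 1" "matrix_inv A ** A = mat 1" by auto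
qed

lemma var_lin:
  fixes M :: "'a measure" and Z :: "'i \<Rightarrow> 'a \<Rightarrow> real" and c :: "'i \<Rightarrow> real"
  assumes P: "prob_space M" and fin: "finite I"
    and iZ: "\<And>i. i \<in> I \<Longrightarrow> integrable M (Z i)"
    and iZZ: "\<And>i j. i \<in> I \<Longrightarrow> j \<in> I \<Longrightarrow> integrable M (\<lambda>w. Z i w * Z j w)"
  defines "K \<equiv> (\<Sum>i\<in>I. c i * integral\<^sup>L M (Z i))"
  shows "integrable M (\<lambda>w. ((\<Sum>i\<in>I. c i * Z i w) - K)^2)"
    "integral\<^sup>L M (\<lambda>w. ((\<Sum>i\<in>I. c i * Z i w) - K)^2) =
      (\<Sum>i\<in>I. \<Sum>j\<in>I. c i * c j * (integral\<^sup>L M (\<lambda>w. Z i w * Z j w) - integral\<^sup>L M (Z i) * integral\<^sup>L M (Z j)))"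
proof -
  interpret prob_space M by fact
  have eq: "((\<Sum>i\<in>I. c i * Z i w) - K)^2 =
     (\<Sum>i\<in>I. \<Sum>j\<in>I. c i * c j * (Z i w * Z j w)) - 2 * K * (\<Sum>i\<in>I. c i * Z i w) + K^2" for w
    by (simp add: power2_eq_square algebra_simps sum_distrib_left sum_distrib_right sum_subtractf)
  have i1: "integrable M (\<lambda>w. \<Sum>i\<in>I. \<Sum>j\<in>I. c i * c j * (Z i w * Z j w))"
    using iZZ by (auto intro!: integrable_sum integrable_mult_right)
  have i2: "integrable M (\<lambda>w. \<Sum>i\<in>I. c i * Z i w)"
    using iZ by (auto intro!: integrable_sum integrable_mult_right)
  show "integrable M (\<lambda>w. ((\<Sum>i\<in>I. c i * Z i w) - K)^2)"
    unfolding eq using i1 i2 by (intro Bochner_Integration.integrable_add Bochner_Integration.integrable_diff integrable_mult_right integrable_const)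
  have A: "integral\<^sup>L M (\<lambda>w. ((\<Sum>i\<in>I. c i * Z i w) - K)^2) =
     (\<Sum>i\<in>I. \<Sum>j\<in>I. c i * c j * integral\<^sup>L M (\<lambda>w. Z i w * Z j w)) - 2 * K * K + K^2"
    unfolding eq using i1 i2 iZ iZZ
    by (simp add: integral_sum integral_mult_right_zero K_def integrable_mult_right prob_space)
  have B: "K * K = (\<Sum>i\<in>I. \<Sum>j\<in>I. c i * c j * (integral\<^sup>L M (Z i) * integral\<^sup>L M (Z j)))"
    unfolding K_def by (simp add: sum_distrib_left sum_distrib_right algebra_simps)
  show "integral\<^sup>L M (\<lambda>w. ((\<Sum>i\<in>I. c i * Z i w) - K)^2) =
      (\<Sum>i\<in>I. \<Sum>j\<in>I. c i * c j * (integral\<^sup>L M (\<lambda>w. Z i w * Z j w) - integral\<^sup>L M (Z i) * integral\<^sup>L M (Z j)))"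
  proof -
    have "(\<Sum>i\<in>I. \<Sum>j\<in>I. c i * c j * (integral\<^sup>L M (\<lambda>w. Z i w * Z j w) - integral\<^sup>L M (Z i) * integral\<^sup>L M (Z j)))
      = (\<Sum>i\<in>I. \<Sum>j\<in>I. c i * c j * integral\<^sup>L M (\<lambda>w. Z i w * Z j w)) - K * K"
      unfolding B by (simp add: right_diff_distrib sum_subtractf)
    then show ?thesis unfolding A by (simp add: power2_eq_square)
  qed
qed

lemma sq_le_s: fixes a N :: real assumes "a^4 \<le> N" shows "a^2 \<le> sqrt N"
  using assms by (intro real_le_rsqrt) (simp add: power_mult[symmetric])
lemma ab_le: fixes a b :: real shows "2 * \<bar>a*b\<bar> \<le> a^2+b^2"
proof -
  have "0 \<le> (\<bar>a\<bar> - \<bar>b\<bar>)^2" by simp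
  then show ?thesis by (simp add: power2_eq_square abs_mult algebra_simps)
qed
lemma a_le: fixes a :: real shows "2 * \<bar>a\<bar> \<le> 1+a^2"
  using ab_le[of a 1] by simp
lemma N_nonneg: fixes a N :: real assumes "a^4 \<le> N" shows "0 \<le> N"
proof -
  have "0 \<le> a^4" by (simp add: zero_le_even_power)
  then show ?thesis using assms by linarith
qed
lemma ineq4: fixes a b c d N :: real assumes "a^4 \<le> N" "b^4 \<le> N" "c^4 \<le> N" "d^4 \<le> N"
  shows "\<bar>a*b*c*d\<bar> \<le> 1 + N"
proof -
  have N: "0 \<le> N" using N_nonneg[OF assms(1)] .
  have s: "sqrt N * sqrt N = N" using N by simp
  have h1: "\<bar>a*b\<bar> \<le> sqrt N" using ab_le[of a b] sq_le_s[OF assms(1)] sq_le_s[OF assms(2)] by linarith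
  have h2: "\<bar>c*d\<bar> \<le> sqrt N" using ab_le[of c d] sq_le_s[OF assms(3)] sq_le_s[OF assms(4)] by linarith
  have "\<bar>a*b*c*d\<bar> = \<bar>a*b\<bar> * \<bar>c*d\<bar>" by (simp add: abs_mult)
  also have "\<dots> \<le> sqrt N * sqrt N" using N by (intro mult_mono h1 h2) auto
  finally show ?thesis using s by linarith
qed
lemma ineq3: fixes a b c N :: real assumes "a^4 \<le> N" "b^4 \<le> N" "c^4 \<le> N"
  shows "\<bar>a*b*c\<bar> \<le> 1 + N"
proof -
  have N: "0 \<le> N" using N_nonneg[OF assms(1)] .
  have s: "sqrt N * sqrt N = N" using N by simp
  have h1: "\<bar>a*b\<bar> \<le> sqrt N" using ab_le[of a b] sq_le_s[OF assms(1)] sq_le_s[OF assms(2)] by linarith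
  have h2: "2 * \<bar>c\<bar> \<le> 1 + sqrt N" using a_le[of c] sq_le_s[OF assms(3)] by linarith
  have h3: "2 * sqrt N \<le> 1 + N" using a_le[of "sqrt N"] N by simp
  have "2 * \<bar>a*b*c\<bar> = \<bar>a*b\<bar> * (2 * \<bar>c\<bar>)" by (simp add: abs_mult)
  also have "\<dots> \<le> sqrt N * (1 + sqrt N)" using N by (intro mult_mono h1 h2) auto
  finally show ?thesis using s h3 N by (simp add: algebra_simps)
qed
lemma ineq2: fixes a b N :: real assumes "a^4 \<le> N" "b^4 \<le> N"
  shows "\<bar>a*b\<bar> \<le> 1 + N"
proof -
  have N: "0 \<le> N" using N_nonneg[OF assms(1)] .
  have h1: "\<bar>a*b\<bar> \<le> sqrt N" using ab_le[of a b] sq_le_s[OF assms(1)] sq_le_s[OF assms(2)] by linarith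
  have h3: "2 * sqrt N \<le> 1 + N" using a_le[of "sqrt N"] N by simp
  show ?thesis using h1 h3 N by linarith
qed
lemma ineq1: fixes a N :: real assumes "a^4 \<le> N"
  shows "\<bar>a\<bar> \<le> 1 + N"
proof -
  have N: "0 \<le> N" using N_nonneg[OF assms(1)] .
  have h3: "2 * sqrt N \<le> 1 + N" using a_le[of "sqrt N"] N by simp
  show ?thesis using a_le[of a] sq_le_s[OF assms] h3 N by linarith
qed



definition Pol :: "('d \<Rightarrow> real) \<Rightarrow> ('d \<times> 'd \<Rightarrow> real) \<Rightarrow> real^'d \<Rightarrow> real" where
  "Pol a1 a2 y = (\<Sum>s\<in>UNIV. a1 s * y $ s) + (\<Sum>p\<in>UNIV. a2 p * (y $ fst p * y $ snd p))"

definition beta :: "('d \<Rightarrow> real) \<Rightarrow> ('d \<times> 'd \<Rightarrow> real) \<Rightarrow> 'd \<Rightarrow> real^'d \<Rightarrow> real" where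
  "beta a1 a2 r z = a1 r + (\<Sum>s\<in>UNIV. (a2 (r, s) + a2 (s, r)) * z $ s)"

lemma sum_pair: "(\<Sum>p\<in>(UNIV::('b::finite \<times> 'c::finite) set). f p) = (\<Sum>a\<in>UNIV. \<Sum>b\<in>UNIV. f (a, b))"
  unfolding sum.cartesian_product by (simp add: UNIV_Times_UNIV[symmetric] del: UNIV_Times_UNIV)

lemma dsum2: "(\<Sum>a\<in>(UNIV::'d::finite set). \<Sum>b\<in>(UNIV::'d set). (if a = r then f b else 0)) = (\<Sum>b\<in>UNIV. f b :: real)"
proof -
  have "(\<Sum>b\<in>(UNIV::'d set). (if a = r then f b else 0)) = (if a = r then (\<Sum>b\<in>UNIV. f b) else 0)" for a
    by (cases "a = r") simp_all
  then show ?thesis by simp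
qed
lemma dsum1: "(\<Sum>a\<in>(UNIV::'d::finite set). \<Sum>b\<in>(UNIV::'d set). (if a = r then (if b = r then c else 0) else 0)) = (c::real)"
  using dsum2[of r "\<lambda>b. if b = r then c else 0"] by simp
lemma dsum3: "(\<Sum>a\<in>(UNIV::'d::finite set). \<Sum>b\<in>(UNIV::'d set). (if b = r then g a else 0)) = (\<Sum>a\<in>UNIV. g a :: real)"
  by simp

lemma pol_decomp:
  "Pol a1 a2 y = a2 (r, r) * (y $ r)^2 + beta a1 a2 r (others r y) * y $ r + Pol a1 a2 (others r y)"
proof -
  define z where "z = others r y"
  have zs: "z $ s = (if s = r then 0 else y $ s)" for s unfolding z_def others_def by simp
  have i: "a1 s * y $ s = a1 s * z $ s + (if s = r then a1 r * y $ r else 0)" for s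
    by (simp add: zs)
  have ii: "a2 (a, b) * (y $ a * y $ b) = a2 (a, b) * (z $ a * z $ b)
     + (if a = r then (if b = r then a2 (r, r) * (y $ r)^2 else 0) else 0)
     + (if a = r then a2 (r, b) * y $ r * z $ b else 0)
     + (if b = r then a2 (a, r) * z $ a * y $ r else 0)" for a b
    by (cases "a = r"; cases "b = r") (simp_all add: zs power2_eq_square)
  have "Pol a1 a2 y = (\<Sum>s\<in>UNIV. a1 s * z $ s) + a1 r * y $ r
     + ((\<Sum>a\<in>UNIV. \<Sum>b\<in>UNIV. a2 (a, b) * (z $ a * z $ b)) + a2 (r, r) * (y $ r)^2
        + (\<Sum>b\<in>UNIV. a2 (r, b) * y $ r * z $ b) + (\<Sum>a\<in>UNIV. a2 (a, r) * z $ a * y $ r))"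
  proof -
    have si: "(\<Sum>s\<in>UNIV. a1 s * y $ s) = (\<Sum>s\<in>UNIV. a1 s * z $ s + (if s = r then a1 r * y $ r else 0))"
      by (intro sum.cong refl) (rule i)
    have sii: "(\<Sum>a\<in>UNIV. \<Sum>b\<in>UNIV. a2 (a, b) * (y $ a * y $ b)) = (\<Sum>a\<in>UNIV. \<Sum>b\<in>UNIV. a2 (a, b) * (z $ a * z $ b)
     + (if a = r then (if b = r then a2 (r, r) * (y $ r)^2 else 0) else 0)
     + (if a = r then a2 (r, b) * y $ r * z $ b else 0)
     + (if b = r then a2 (a, r) * z $ a * y $ r else 0))"
      by (intro sum.cong refl) (rule ii)
    show ?thesis unfolding Pol_def sum_pair fst_conv snd_conv si sii sum.distrib dsum1 dsum2 dsum3 by simp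
  qed
  also have "\<dots> = a2 (r, r) * (y $ r)^2 + beta a1 a2 r z * y $ r + Pol a1 a2 z"
  proof -
    have "beta a1 a2 r z * y $ r = a1 r * y $ r + (\<Sum>b\<in>UNIV. a2 (r, b) * y $ r * z $ b) + (\<Sum>a\<in>UNIV. a2 (a, r) * z $ a * y $ r)"
      unfolding beta_def by (simp add: algebra_simps sum.distrib sum_distrib_left sum_distrib_right)
    then show ?thesis unfolding Pol_def sum_pair by simp
  qed
  finally show ?thesis unfolding z_def .
qed

definition groot :: "real \<Rightarrow> real \<Rightarrow> real \<Rightarrow> real" where
  "groot a b c = (-b + sqrt (discrim a b c)) / (2 * a)"
definition hroot :: "real \<Rightarrow> real \<Rightarrow> real \<Rightarrow> real" where
  "hroot a b c = (-b - sqrt (discrim a b c)) / (2 * a)"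

lemma two_point:
  fixes a1 :: "'d::finite \<Rightarrow> real" and a2 :: "'d \<times> 'd \<Rightarrow> real" and X :: "'a \<Rightarrow> real^'d"
  assumes nz: "a2 (r, r) \<noteq> 0" and ae: "AE w in M. Pol a1 a2 (X w) = K"
  shows "cond_two_point M X r"
  unfolding cond_two_point_def
proof (intro exI conjI)
  let ?g = "\<lambda>z. groot (a2 (r, r)) (beta a1 a2 r z) (Pol a1 a2 z - K)"
  let ?h = "\<lambda>z. hroot (a2 (r, r)) (beta a1 a2 r z) (Pol a1 a2 z - K)"
  show "?g \<in> borel_measurable borel" unfolding groot_def discrim_def beta_def Pol_def by measurable
  show "?h \<in> borel_measurable borel" unfolding hroot_def discrim_def beta_def Pol_def by measurable
  show "AE w in M. X w $ r = ?g (others r (X w)) \<or> X w $ r = ?h (others r (X w))"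
    using ae
  proof (rule AE_mp, intro AE_I2 impI)
    fix w assume "Pol a1 a2 (X w) = K"
    then have "a2 (r, r) * (X w $ r)^2 + beta a1 a2 r (others r (X w)) * X w $ r + (Pol a1 a2 (others r (X w)) - K) = 0"
      using pol_decomp[of a1 a2 "X w" r] by simp
    then show "X w $ r = ?g (others r (X w)) \<or> X w $ r = ?h (others r (X w))"
      unfolding groot_def hroot_def using discriminant_iff[OF nz] by blast
  qed
qed



lemma quad_zero: fixes b c :: real assumes "\<And>t. 0 \<le> 2*t*b + t^2*c" shows "b = 0"
proof (cases "c \<le> 0")
  case True
  have "0 \<le> 2*(-b)*b + (-b)^2*c" by (rule assms)
  moreover have "b^2 * c \<le> 0" using True by (simp add: mult_nonneg_nonpos)
  ultimately have "b^2 \<le> 0" by (simp add: power2_eq_square algebra_simps)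
  then show ?thesis by simp
next
  case False
  have "0 \<le> 2*(-b/c)*b + (-b/c)^2*c" by (rule assms)
  also have "2*(-b/c)*b + (-b/c)^2*c = - (b^2 / c)" using False by (simp add: power2_eq_square field_simps)
  finally have "b^2 / c \<le> 0" by simp
  then have "b^2 \<le> 0" using False by (simp add: divide_le_0_iff)
  then show ?thesis by simp
qed

lemma psd_null:
  fixes S :: "real^'n^'n" and y :: "real^'n"
  assumes psd: "\<And>x. 0 \<le> x \<bullet> (S *v x)" and sym: "transpose S = S" and z: "y \<bullet> (S *v y) = 0"
  shows "S *v y = 0"
proof -
  have "(S *v y) $ r = 0" for r
  proof -
    define e :: "real^'n" where "e = axis r 1"
    have sc: "S *v (t *\<^sub>R e) = t *\<^sub>R (S *v e)" for t
      by (simp add: vec_eq_iff matrix_vector_mult_def sum_distrib_left mult_ac)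
    have symm: "y \<bullet> (S *v e) = e \<bullet> (S *v y)"
    proof -
      have "y \<bullet> (S *v e) = (y v* S) \<bullet> e" by (simp add: dot_lmul_matrix)
      also have "y v* S = S *v y" using vector_transpose_matrix[of y S] sym by simp
      finally show ?thesis by (simp add: inner_commute)
    qed
    have ey: "e \<bullet> (S *v y) = (S *v y) $ r" unfolding e_def by (simp add: inner_axis')
    have "0 \<le> 2*t*((S *v y) $ r) + t^2*(e \<bullet> (S *v e))" for t
    proof -
      have "0 \<le> (y + t *\<^sub>R e) \<bullet> (S *v (y + t *\<^sub>R e))" by (rule psd)
      also have "\<dots> = y \<bullet> (S *v y) + t * (y \<bullet> (S *v e)) + t * (e \<bullet> (S *v y)) + t^2 * (e \<bullet> (S *v e))"
        by (simp add: matrix_vector_right_distrib sc inner_add_left inner_add_right power2_eq_square algebra_simps)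
      finally show ?thesis using z symm ey by (simp add: algebra_simps)
    qed
    then show ?thesis by (rule quad_zero)
  qed
  then show ?thesis by (simp add: vec_eq_iff)
qed

locale mcv_setting =
  fixes M :: "'a measure" and X :: "'a \<Rightarrow> real^'d"
  assumes P: "prob_space M" and Xm: "X \<in> borel_measurable M"
    and X4: "\<And>i. integrable M (\<lambda>w. (X w $ i) ^ 4)"
begin

lemma meas_nth: "(\<lambda>w. X w $ i) \<in> borel_measurable M"
  by (rule measurable_compose[OF Xm]) (intro borel_measurable_continuous_onI continuous_intros)

definition "Nf w = (\<Sum>i\<in>UNIV. (X w $ i) ^ 4)"

lemma Nf_ge: "(X w $ i)^4 \<le> Nf w"
  unfolding Nf_def by (rule member_le_sum) (auto simp: zero_le_even_power)

lemma int_B: "integrable M (\<lambda>w. 1 + Nf w)"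
proof -
  interpret prob_space M by (rule P)
  show ?thesis unfolding Nf_def using X4 by (intro Bochner_Integration.integrable_add integrable_const integrable_sum) auto
qed

lemma B_nonneg: "0 \<le> 1 + Nf w"
  using N_nonneg[OF Nf_ge[of w]] by simp

lemma int_by_B:
  assumes "g \<in> borel_measurable M" "\<And>w. \<bar>g w\<bar> \<le> 1 + Nf w"
  shows "integrable M g"
  apply (rule Bochner_Integration.integrable_bound[OF int_B assms(1)])
  using assms(2) B_nonneg by (auto intro!: AE_I2)

lemma int1: "integrable M (\<lambda>w. X w $ a)"
  by (rule int_by_B) (auto intro: meas_nth ineq1 Nf_ge)
lemma int2: "integrable M (\<lambda>w. X w $ a * X w $ b)"
  by (rule int_by_B) (auto intro!: borel_measurable_times meas_nth intro: ineq2 Nf_ge)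
lemma int3: "integrable M (\<lambda>w. X w $ a * X w $ b * X w $ c)"
  by (rule int_by_B) (auto intro!: borel_measurable_times meas_nth intro: ineq3 Nf_ge)
lemma int4: "integrable M (\<lambda>w. X w $ a * X w $ b * X w $ c * X w $ d)"
  by (rule int_by_B) (auto intro!: borel_measurable_times meas_nth intro: ineq4 Nf_ge)

definition Zf :: "'d + ('d \<times> 'd) \<Rightarrow> 'a \<Rightarrow> real" where
  "Zf i w = (case i of Inl s \<Rightarrow> X w $ s | Inr p \<Rightarrow> X w $ fst p * X w $ snd p)"

lemma intZ: "integrable M (Zf i)"
  by (cases i) (auto simp: Zf_def[abs_def] int1 int2)

lemma intZZ: "integrable M (\<lambda>w. Zf i w * Zf j w)"
  by (cases i; cases j) (auto simp: Zf_def int2 int3 int4 mult.assoc[symmetric])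

lemma sum_UNIV_Plus: "(\<Sum>i\<in>(UNIV::('b::finite + 'c::finite) set). f i) = (\<Sum>s\<in>UNIV. f (Inl s)) + (\<Sum>p\<in>UNIV. f (Inr p))"
  by (subst UNIV_Plus_UNIV[symmetric], subst sum.Plus) auto

lemma Psi3_alt: "Psi3 M X p s = E M (\<lambda>w. X w $ fst p * X w $ snd p * X w $ s) - E M (\<lambda>w. X w $ fst p * X w $ snd p) * E M (\<lambda>w. X w $ s)"
  by (cases p) (simp add: Psi3_def)
lemma Psi4_alt: "Psi4 M X p q = E M (\<lambda>w. X w $ fst p * X w $ snd p * X w $ fst q * X w $ snd q) - E M (\<lambda>w. X w $ fst p * X w $ snd p) * E M (\<lambda>w. X w $ fst q * X w $ snd q)"
  by (cases p; cases q) (simp add: Psi4_def)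

definition "cf a1 a2 = case_sum a1 a2"
definition "Lf a1 a2 w = (\<Sum>i\<in>UNIV. cf a1 a2 i * Zf i w)"
definition "Kc a1 a2 = (\<Sum>i\<in>UNIV. cf a1 a2 i * E M (Zf i))"

lemma bracket:
  fixes a1 :: "'d \<Rightarrow> real" and a2 :: "'d \<times> 'd \<Rightarrow> real"
  shows "(\<Sum>r\<in>UNIV. \<Sum>s\<in>UNIV. a1 r * Sig M X $ r $ s * a1 s)
     + (\<Sum>r\<in>UNIV. \<Sum>p\<in>UNIV. a1 r * Psi3 M X p r * a2 p)
     + (\<Sum>p\<in>UNIV. \<Sum>s\<in>UNIV. a2 p * Psi3 M X p s * a1 s)
     + (\<Sum>p\<in>UNIV. \<Sum>q\<in>UNIV. a2 p * Psi4 M X p q * a2 q)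
   = E M (\<lambda>w. (Lf a1 a2 w - Kc a1 a2)^2)"
    and "integrable M (\<lambda>w. (Lf a1 a2 w - Kc a1 a2)^2)"
proof -
  note V = var_lin[OF P, of UNIV Zf "cf a1 a2", OF _ intZ intZZ, simplified]
  show "integrable M (\<lambda>w. (Lf a1 a2 w - Kc a1 a2)^2)"
    using V(1) unfolding Lf_def Kc_def E_def .
  have "E M (\<lambda>w. (Lf a1 a2 w - Kc a1 a2)^2) =
    (\<Sum>i\<in>UNIV. \<Sum>j\<in>UNIV. cf a1 a2 i * cf a1 a2 j * (integral\<^sup>L M (\<lambda>w. Zf i w * Zf j w) - integral\<^sup>L M (Zf i) * integral\<^sup>L M (Zf j)))"
    using V(2) unfolding Lf_def Kc_def E_def .
  also have "\<dots> = (\<Sum>r\<in>UNIV. \<Sum>s\<in>UNIV. a1 r * Sig M X $ r $ s * a1 s)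
     + (\<Sum>r\<in>UNIV. \<Sum>p\<in>UNIV. a1 r * Psi3 M X p r * a2 p)
     + ((\<Sum>p\<in>UNIV. \<Sum>s\<in>UNIV. a2 p * Psi3 M X p s * a1 s)
     + (\<Sum>p\<in>UNIV. \<Sum>q\<in>UNIV. a2 p * Psi4 M X p q * a2 q))"
  proof -
    have B1: "(\<Sum>x\<in>UNIV. \<Sum>s\<in>UNIV. cf a1 a2 (Inl x) * cf a1 a2 (Inl s) * (integral\<^sup>L M (\<lambda>w. Zf (Inl x) w * Zf (Inl s) w) - integral\<^sup>L M (Zf (Inl x)) * integral\<^sup>L M (Zf (Inl s))))
      = (\<Sum>r\<in>UNIV. \<Sum>s\<in>UNIV. a1 r * Sig M X $ r $ s * a1 s)"
      by (intro sum.cong refl) (simp add: cf_def Zf_def[abs_def] Sig_def mu_def E_def)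
    have B2: "(\<Sum>x\<in>UNIV. \<Sum>p\<in>UNIV. cf a1 a2 (Inl x) * cf a1 a2 (Inr p) * (integral\<^sup>L M (\<lambda>w. Zf (Inl x) w * Zf (Inr p) w) - integral\<^sup>L M (Zf (Inl x)) * integral\<^sup>L M (Zf (Inr p))))
      = (\<Sum>r\<in>UNIV. \<Sum>p\<in>UNIV. a1 r * Psi3 M X p r * a2 p)"
      by (intro sum.cong refl) (simp add: cf_def Zf_def[abs_def] Psi3_alt E_def mult_ac)
    have B3: "(\<Sum>x\<in>UNIV. \<Sum>s\<in>UNIV. cf a1 a2 (Inr x) * cf a1 a2 (Inl s) * (integral\<^sup>L M (\<lambda>w. Zf (Inr x) w * Zf (Inl s) w) - integral\<^sup>L M (Zf (Inr x)) * integral\<^sup>L M (Zf (Inl s))))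
      = (\<Sum>p\<in>UNIV. \<Sum>s\<in>UNIV. a2 p * Psi3 M X p s * a1 s)"
      by (intro sum.cong refl) (simp add: cf_def Zf_def[abs_def] Psi3_alt E_def mult_ac)
    have B4: "(\<Sum>x\<in>UNIV. \<Sum>q\<in>UNIV. cf a1 a2 (Inr x) * cf a1 a2 (Inr q) * (integral\<^sup>L M (\<lambda>w. Zf (Inr x) w * Zf (Inr q) w) - integral\<^sup>L M (Zf (Inr x)) * integral\<^sup>L M (Zf (Inr q))))
      = (\<Sum>p\<in>UNIV. \<Sum>q\<in>UNIV. a2 p * Psi4 M X p q * a2 q)"
      by (intro sum.cong refl) (simp add: cf_def Zf_def[abs_def] Psi4_alt E_def mult_ac)
    show ?thesis unfolding sum_UNIV_Plus sum.distrib B1 B2 B3 B4 by simp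
  qed
  finally show "(\<Sum>r\<in>UNIV. \<Sum>s\<in>UNIV. a1 r * Sig M X $ r $ s * a1 s)
     + (\<Sum>r\<in>UNIV. \<Sum>p\<in>UNIV. a1 r * Psi3 M X p r * a2 p)
     + (\<Sum>p\<in>UNIV. \<Sum>s\<in>UNIV. a2 p * Psi3 M X p s * a1 s)
     + (\<Sum>p\<in>UNIV. \<Sum>q\<in>UNIV. a2 p * Psi4 M X p q * a2 q)
   = E M (\<lambda>w. (Lf a1 a2 w - Kc a1 a2)^2)" by simp
qed

lemma Lf_Pol: "Lf a1 a2 w = Pol a1 a2 (X w)"
  unfolding Lf_def sum_UNIV_Plus cf_def Zf_def Pol_def by simp

lemma bracket_nonneg: "0 \<le> E M (\<lambda>w. (Lf a1 a2 w - Kc a1 a2)^2)"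
  unfolding E_def by (rule integral_nonneg_AE) simp

lemma bracket_pos:
  fixes a1 :: "'d \<Rightarrow> real" and a2 :: "'d \<times> 'd \<Rightarrow> real"
  assumes nz: "a2 (r, r) \<noteq> 0" and ntp: "\<not> cond_two_point M X r"
  shows "0 < E M (\<lambda>w. (Lf a1 a2 w - Kc a1 a2)^2)"
proof (rule ccontr)
  assume "\<not> 0 < E M (\<lambda>w. (Lf a1 a2 w - Kc a1 a2)^2)"
  then have z: "integral\<^sup>L M (\<lambda>w. (Lf a1 a2 w - Kc a1 a2)^2) = 0"
    using bracket_nonneg[of a1 a2] unfolding E_def by simp
  have "AE w in M. (Lf a1 a2 w - Kc a1 a2)^2 = 0"
    using integral_nonneg_eq_0_iff_AE[OF bracket(2)[of a1 a2]] z by simp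
  then have "AE w in M. Pol a1 a2 (X w) = Kc a1 a2"
    by (rule AE_mp) (auto simp: Lf_Pol)
  then have "cond_two_point M X r" by (rule two_point[where ?a2.0=a2 and r=r, OF nz])
  with ntp show False by simp
qed

lemma Sig_psd: "0 \<le> y \<bullet> (Sig M X *v y)"
proof -
  have "y \<bullet> (Sig M X *v y) = (\<Sum>r\<in>UNIV. \<Sum>s\<in>UNIV. y $ r * Sig M X $ r $ s * y $ s)"
    by (simp add: inner_vec_def matrix_vector_mult_def sum_distrib_left mult_ac)
  also have "\<dots> = E M (\<lambda>w. (Lf (\<lambda>s. y $ s) (\<lambda>_. 0) w - Kc (\<lambda>s. y $ s) (\<lambda>_. 0))^2)"
    using bracket(1)[of "\<lambda>s. y $ s" "\<lambda>_. 0"] by simp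
  finally show ?thesis using bracket_nonneg by simp
qed

lemma Sig_sym: "transpose (Sig M X) = Sig M X"
  by (simp add: Sig_def transpose_def vec_eq_iff mult.commute)

end

theorem lemma2:
  fixes M :: "'a measure" and X :: "'a \<Rightarrow> real^'d" and v :: mcv_variant
  assumes "prob_space M"
    and "X \<in> borel_measurable M"
    and "assumption1 v M X"
    and "assumption2 M X"
  shows "sigma2_C v M X > 0 \<and> sigma2_B v M X > 0"
proof -
  have m0: "mu M X \<noteq> 0" and X4: "\<And>i. integrable M (\<lambda>w. (X w $ i) ^ 4)"
    using assms(3) unfolding assumption1_def by auto
  interpret mcv_setting M X by (rule mcv_setting.intro[OF assms(1) assms(2) X4])
  define m where "m = mu M X"
  define S where "S = Sig M X"
  have mm: "0 < m \<bullet> m" using m0 unfolding m_def by simp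
  have psd: "\<And>x. 0 \<le> x \<bullet> (S *v x)" unfolding S_def by (rule Sig_psd)
  have null: "\<And>y. y \<bullet> (S *v y) = 0 \<Longrightarrow> S *v y = 0"
    by (rule psd_null[OF psd]) (simp_all add: S_def Sig_sym)
  have dpos: "0 < real CARD('d)" by simp
  have key: "MCV v m S \<noteq> 0 \<and> 0 < Sfac v m S \<and> (\<exists>r. A2 v m S (r, r) \<noteq> 0)"
  proof (cases v)
    case RR
    have inv: "invertible S" using assms(3) RR unfolding assumption1_def S_def by simp
    have det: "det S \<noteq> 0" using inv invertible_det_nz by blast
    have mcv: "MCV v m S \<noteq> 0" using RR det mm by (simp add: MCV_def)
    have sf: "0 < Sfac v m S" using RR mcv dpos by (simp add: Sfac_def)
    obtain r :: 'd where True by simp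
    define e :: "real^'d" where "e = axis r 1"
    define y where "y = matrix_inv S *v e"
    have Sy: "S *v y = e" unfolding y_def matrix_vector_mul_assoc minv(1)[OF inv] by simp
    have "matrix_inv S $ r $ r \<noteq> 0"
    proof
      assume h: "matrix_inv S $ r $ r = 0"
      have "y \<bullet> (S *v y) = y $ r" unfolding Sy e_def by (simp add: inner_axis)
      also have "y $ r = matrix_inv S $ r $ r" unfolding y_def e_def
        by (simp add: matrix_vector_mult_basis column_def)
      finally have "S *v y = 0" using h null by simp
      then show False using Sy unfolding e_def by simp
    qed
    then have "A2 v m S (r, r) \<noteq> 0" using RR det mm by (simp add: A2_def)
    then show ?thesis using mcv sf by blast
  next
    case VV
    have S0: "S \<noteq> 0" using assms(3) VV unfolding assumption1_def S_def by simp
    have diag: "S $ i $ i = axis i 1 \<bullet> (S *v axis i 1)" for i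
      by (simp add: inner_axis' matrix_vector_mult_basis column_def)
    have tr: "trace_m S \<noteq> 0"
    proof
      assume h: "trace_m S = 0"
      have nn: "0 \<le> S $ i $ i" for i by (subst diag) (rule psd)
      have d0: "S $ i $ i = 0" for i
        using h sum_nonneg_eq_0_iff[of UNIV "\<lambda>i. S $ i $ i"] nn unfolding trace_m_def by simp
      have col: "S *v axis i 1 = 0" for i
        by (rule null) (use diag[of i] d0[of i] in simp)
      have "S $ j $ i = 0" for i j
      proof -
        have "S $ j $ i = (S *v axis i 1) $ j" by (simp add: matrix_vector_mult_basis column_def)
        then show ?thesis using col[of i] by simp
      qed
      then have "S = 0" by (simp add: vec_eq_iff)
      with S0 show False by simp
    qed
    have mcv: "MCV v m S \<noteq> 0" using VV tr mm by (simp add: MCV_def)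
    have sf: "0 < Sfac v m S" using VV mcv by (simp add: Sfac_def)
    have "A2 v m S (r, r) \<noteq> 0" for r using VV mm by (simp add: A2_def)
    then show ?thesis using mcv sf by blast
  next
    case VN
    have inv: "invertible S" using assms(3) VN unfolding assumption1_def S_def by simp
    define y where "y = matrix_inv S *v m"
    have Sy: "S *v y = m" unfolding y_def matrix_vector_mul_assoc minv(1)[OF inv] by simp
    have q: "m \<bullet> (matrix_inv S *v m) \<noteq> 0"
    proof
      assume "m \<bullet> (matrix_inv S *v m) = 0"
      then have "y \<bullet> (S *v y) = 0" by (simp only: Sy) (simp add: y_def inner_commute)
      then have "S *v y = 0" by (rule null)
      then show False using Sy m0 unfolding m_def by simp
    qed
    have mcv: "MCV v m S \<noteq> 0" using VN q by (simp add: MCV_def)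
    have sf: "0 < Sfac v m S" using VN mcv by (simp add: Sfac_def)
    have u: "m v* matrix_inv S \<noteq> 0"
    proof
      assume "m v* matrix_inv S = 0"
      then have "(m v* matrix_inv S) v* S = 0" by (simp add: vec_eq_iff vector_matrix_mult_def)
      then have "m = 0" unfolding vector_matrix_mul_assoc minv(2)[OF inv] by simp
      then show False using m0 unfolding m_def by simp
    qed
    then obtain r where "(m v* matrix_inv S) $ r \<noteq> 0" by (auto simp: vec_eq_iff)
    then have "A2 v m S (r, r) \<noteq> 0" using VN by (simp add: A2_def)
    then show ?thesis using mcv sf by blast
  next
    case AZ
    have q: "0 < m \<bullet> (S *v m)" using assms(3) AZ unfolding assumption1_def S_def m_def by simp
    have mcv: "MCV v m S \<noteq> 0" using AZ q mm by (simp add: MCV_def)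
    have sf: "0 < Sfac v m S" using AZ mcv by (simp add: Sfac_def)
    obtain r where "m $ r \<noteq> 0" using m0 unfolding m_def by (auto simp: vec_eq_iff)
    then have "A2 v m S (r, r) \<noteq> 0" using AZ mm by (simp add: A2_def)
    then show ?thesis using mcv sf by blast
  qed
  then obtain r where r: "A2 v m S (r, r) \<noteq> 0" by blast
  have ntp: "\<not> cond_two_point M X r" using assms(4) unfolding assumption2_def by simp
  have br: "0 < E M (\<lambda>w. (Lf (A1 v m S) (A2 v m S) w - Kc (A1 v m S) (A2 v m S))^2)"
    by (rule bracket_pos[where ?a2.0="A2 v m S" and r=r, OF r ntp])
  have C: "0 < sigma2_C v M X"
    unfolding sigma2_C_def Let_def m_def[symmetric] S_def[symmetric]
    unfolding S_def bracket(1) unfolding S_def[symmetric]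
    using br key by simp
  have "0 < sigma2_B v M X"
    unfolding sigma2_B_def m_def[symmetric] S_def[symmetric] using C key by simp
  with C show ?thesis by simp
qed

end
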